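(* Let $D$ be a knot diagram that is ascending from a base point $b$, and regard $D$ as a $(1,1)$-tangle diagram by moving $b$ to infinity via a planar isotopy of $S^2$. Then a Reidemeister I, II, or III move can be applied to every bounded $1$-, $2$-, or $3$-sided face of $D$, respectively.
   Context: An oriented knot diagram is ascending from a point $b$ (not a crossing) if, travelling along the knot from $b$ in the direction of the orientation, every crossing is first met along its under-strand and later along its over-strand. A $2$-sided face admits a Reidemeister II move when one of its edges is the over-strand at both its crossings; a $3$-sided face admits a Reidemeister III move when one of its edges is the over-strand at both of its crossings. *)

theory Defs
  imports Main
begin

text \<open>
Travelling along the knot we meet 2n crossing-visits, numbered 0..2n-1 in the
direction of the orientation; visit i lies at crossing cr i, and ov i says whether
at visit i we are on the over-strand.  Edge i runs from visit i to visit (i+1) mod 2n.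
Darts (half-edges) are pairs (i, s): (i, True) is the start of edge i at visit i,
(i, False) is the end of edge (i-1) mod 2n at visit i.  The planar embedding is given
by a rotation system rot (cyclic order of the four darts around each crossing);
faces are the orbits of the face-tracing permutation, and planarity (genus 0)
is the Euler condition  #faces = n + 2  (the curve is connected).
\<close>

type_synonym dart = "nat \<times> bool"

definition darts :: "nat \<Rightarrow> dart set" where
  "darts n = {d. fst d < 2 * n}"

definition opp :: "nat \<Rightarrow> dart \<Rightarrow> dart" where
  "opp n d = (if snd d then ((fst d + 1) mod (2 * n), False)
              else ((fst d + 2 * n - 1) mod (2 * n), True))"

definition face_step :: "nat \<Rightarrow> (dart \<Rightarrow> dart) \<Rightarrow> dart \<Rightarrow> dart" where
  "face_step n rot d = rot (opp n d)"

definition face_of :: "nat \<Rightarrow> (dart \<Rightarrow> dart) \<Rightarrow> dart \<Rightarrow> dart set" where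
  "face_of n rot d = {(face_step n rot ^^ k) d | k. True}"

definition faces :: "nat \<Rightarrow> (dart \<Rightarrow> dart) \<Rightarrow> dart set set" where
  "faces n rot = face_of n rot ` darts n"

definition edge_of :: "nat \<Rightarrow> dart \<Rightarrow> nat" where
  "edge_of n d = (if snd d then fst d else (fst d + 2 * n - 1) mod (2 * n))"

definition knot_diagram ::
  "nat \<Rightarrow> (nat \<Rightarrow> nat) \<Rightarrow> (nat \<Rightarrow> bool) \<Rightarrow> (dart \<Rightarrow> dart) \<Rightarrow> bool" where
  "knot_diagram n cr ov rot \<longleftrightarrow>
     (\<forall>i < 2 * n. cr i < n) \<and>
     (\<forall>c < n. card {i. i < 2 * n \<and> cr i = c} = 2) \<and>
     (\<forall>i < 2 * n. \<forall>j < 2 * n. i \<noteq> j \<and> cr i = cr j \<longrightarrow> ov i \<noteq> ov j) \<and>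
     (\<forall>d \<in> darts n. rot d \<in> darts n \<and> cr (fst (rot d)) = cr (fst d) \<and>
                      rot (rot d) = (fst d, \<not> snd d)) \<and>
     (n = 0 \<or> card (faces n rot) = n + 2)"

text \<open>Position of visit i when travelling from a base point b on edge e
  (b lies between visit e and visit (e+1) mod 2n).\<close>
definition pos_from :: "nat \<Rightarrow> nat \<Rightarrow> nat \<Rightarrow> nat" where
  "pos_from n e i = (i + 2 * n - Suc e) mod (2 * n)"

definition ascending_from :: "nat \<Rightarrow> (nat \<Rightarrow> nat) \<Rightarrow> (nat \<Rightarrow> bool) \<Rightarrow> nat \<Rightarrow> bool" where
  "ascending_from n cr ov e \<longleftrightarrow>
     (\<forall>i < 2 * n. \<forall>j < 2 * n. i \<noteq> j \<and> cr i = cr j \<and> pos_from n e i < pos_from n e j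
        \<longrightarrow> \<not> ov i \<and> ov j)"

text \<open>After moving b to infinity, the bounded faces are those not adjacent to edge e.\<close>
definition bounded_face :: "nat \<Rightarrow> nat \<Rightarrow> dart set \<Rightarrow> bool" where
  "bounded_face n e F \<longleftrightarrow> (\<forall>d \<in> F. edge_of n d \<noteq> e)"

definition over_edge :: "nat \<Rightarrow> (nat \<Rightarrow> bool) \<Rightarrow> nat \<Rightarrow> bool" where
  "over_edge n ov k \<longleftrightarrow> ov k \<and> ov ((k + 1) mod (2 * n))"

definition admits_R1 :: "nat \<Rightarrow> (dart \<Rightarrow> dart) \<Rightarrow> dart set \<Rightarrow> bool" where
  "admits_R1 n rot F \<longleftrightarrow> card F = 1 \<and> (\<exists>d \<in> F. face_step n rot d = d)"

definition admits_R2 :: "nat \<Rightarrow> (nat \<Rightarrow> bool) \<Rightarrow> dart set \<Rightarrow> bool" where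
  "admits_R2 n ov F \<longleftrightarrow> card F = 2 \<and> (\<exists>d \<in> F. over_edge n ov (edge_of n d))"

definition admits_R3 :: "nat \<Rightarrow> (nat \<Rightarrow> bool) \<Rightarrow> dart set \<Rightarrow> bool" where
  "admits_R3 n ov F \<longleftrightarrow> card F = 3 \<and> (\<exists>d \<in> F. over_edge n ov (edge_of n d))"

end

theory Submission
  imports Defs
begin

lemma arith_back:
  fixes x n :: nat
  assumes "x < 2 * n"
  shows "((x + 1) mod (2 * n) + 2 * n - 1) mod (2 * n) = x"
proof (cases "x + 1 = 2 * n")
  case True
  then have "(x + 1) mod (2 * n) = 0" by simp
  then have "((x + 1) mod (2 * n) + 2 * n - 1) mod (2 * n) = (2 * n - 1) mod (2 * n)" by simp
  also have "\<dots> = 2 * n - 1" using assms by simp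
  finally show ?thesis using True by simp
next
  case False
  then have "(x + 1) mod (2 * n) = x + 1" using assms by simp
  then have "((x + 1) mod (2 * n) + 2 * n - 1) mod (2 * n) = (x + 2 * n) mod (2 * n)" by simp
  also have "\<dots> = x" using assms by simp
  finally show ?thesis .
qed

lemma arith_fwd:
  fixes x n :: nat
  assumes "x < 2 * n"
  shows "((x + 2 * n - 1) mod (2 * n) + 1) mod (2 * n) = x"
proof (cases "x = 0")
  case True
  then have "(x + 2 * n - 1) mod (2 * n) = 2 * n - 1" using assms by simp
  then show ?thesis using assms True by simp
next
  case False
  then have "x + 2 * n - 1 = (x - 1) + 2 * n" by simp
  then have "(x + 2 * n - 1) mod (2 * n) = (x - 1) mod (2 * n)" by simp
  also have "\<dots> = x - 1" using assms by simp
  finally show ?thesis using assms False by simp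
qed

lemma pos_eq:
  assumes "i < 2 * n" "e < 2 * n"
  shows "pos_from n e i = (if e < i then i - Suc e else i + 2 * n - Suc e)"
proof (cases "e < i")
  case True
  then have "i + 2 * n - Suc e = (i - Suc e) + 2 * n" by simp
  then have "pos_from n e i = (i - Suc e) mod (2 * n)" unfolding pos_from_def by simp
  then show ?thesis using True assms by simp
next
  case False
  then show ?thesis unfolding pos_from_def using assms by simp
qed

lemma pos_lt: "e < 2 * n \<Longrightarrow> i < 2 * n \<Longrightarrow> pos_from n e i < 2 * n"
  unfolding pos_from_def by simp

lemma arith_back':
  fixes x n :: nat
  shows "x < 2 * n \<Longrightarrow> (Suc x mod (2 * n) + 2 * n - Suc 0) mod (2 * n) = x"
  using arith_back[of x n] by simp

lemma arith_fwd':
  fixes x n :: nat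
  shows "x < 2 * n \<Longrightarrow> Suc ((x + 2 * n - Suc 0) mod (2 * n)) mod (2 * n) = x"
  using arith_fwd[of x n] by simp

lemma pos_inj:
  assumes "i < 2 * n" "j < 2 * n" "e < 2 * n" "pos_from n e i = pos_from n e j"
  shows "i = j"
proof -
  have a: "pos_from n e i = (if e < i then i - Suc e else i + 2 * n - Suc e)" using assms pos_eq by blast
  have b: "pos_from n e j = (if e < j then j - Suc e else j + 2 * n - Suc e)" using assms pos_eq by blast
  show ?thesis
    using a b assms(1-4) by (cases "e < i"; cases "e < j"; simp; linarith)
qed

lemma pos_succ:
  assumes "k < 2 * n" "e < 2 * n" "k \<noteq> e"
  shows "pos_from n e ((k + 1) mod (2 * n)) = pos_from n e k + 1"
proof (cases "k + 1 = 2 * n")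
  case True
  then show ?thesis using assms pos_eq[of k n e] pos_eq[of 0 n e] by auto
next
  case False
  then have "(k + 1) mod (2 * n) = k + 1" using assms by simp
  then show ?thesis using assms False pos_eq[of k n e] pos_eq[of "k+1" n e] by auto
qed

lemma finite_darts: "finite (darts n)"
proof -
  have "darts n = {..<2*n} \<times> (UNIV :: bool set)" unfolding darts_def by auto
  then show ?thesis by simp
qed

lemma opp_dart: "n > 0 \<Longrightarrow> opp n d \<in> darts n"
  unfolding opp_def darts_def by auto

lemma opp_opp: "d \<in> darts n \<Longrightarrow> opp n (opp n d) = d"
  unfolding opp_def darts_def
  by (cases d) (auto simp: arith_back' arith_fwd')

lemma dart_edge:
  assumes "d \<in> darts n"
  shows "edge_of n d < 2 * n"
    and "fst d = edge_of n d \<or> fst d = (edge_of n d + 1) mod (2 * n)"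
    and "fst (opp n d) = edge_of n d \<or> fst (opp n d) = (edge_of n d + 1) mod (2 * n)"
    and "d = (edge_of n d, True) \<or> d = ((edge_of n d + 1) mod (2 * n), False)"
  using assms unfolding darts_def edge_of_def opp_def
  by (cases d; auto simp: arith_fwd arith_fwd')+


context
  fixes n :: nat and cr :: "nat \<Rightarrow> nat" and ov :: "nat \<Rightarrow> bool"
    and rot :: "dart \<Rightarrow> dart" and e :: nat
  assumes kd: "knot_diagram n cr ov rot"
    and e_lt: "e < 2 * n"
    and asc: "ascending_from n cr ov e"
begin

lemma npos: "n > 0" using e_lt by simp

lemma rot_props:
  assumes "d \<in> darts n"
  shows "rot d \<in> darts n" "cr (fst (rot d)) = cr (fst d)" "rot (rot d) = (fst d, \<not> snd d)"
  using kd assms unfolding knot_diagram_def by auto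

lemma rot_fst_ne:
  assumes d: "d \<in> darts n"
  shows "fst (rot d) \<noteq> fst d"
proof
  assume h: "fst (rot d) = fst d"
  obtain i s where ds: "d = (i, s)" by (cases d)
  have rd: "rot d \<in> darts n" using rot_props d by blast
  have rr: "rot (rot d) = (i, \<not> s)" using rot_props(3)[OF d] ds by simp
  have "rot d = (i, s) \<or> rot d = (i, \<not> s)" using h ds by (cases "rot d") auto
  then show False
  proof
    assume "rot d = (i, s)"
    then show False using rr ds by simp
  next
    assume a: "rot d = (i, \<not> s)"
    then have "rot (rot (rot d)) = (i, \<not> s)" using rr by simp
    moreover have "rot (rot (rot d)) = (i, s)" using rot_props(3)[OF rd] a by simp
    ultimately show False by simp
  qed
qed

lemma rot_inj:
  assumes "x \<in> darts n" "y \<in> darts n" "rot x = rot y"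
  shows "x = y"
proof -
  have "(fst x, \<not> snd x) = (fst y, \<not> snd y)"
    using rot_props(3)[OF assms(1)] rot_props(3)[OF assms(2)] assms(3) by simp
  then show ?thesis by (simp add: prod_eq_iff)
qed

lemma partner_unique:
  assumes "i < 2 * n" "j < 2 * n" "j' < 2 * n" "cr j = cr i" "cr j' = cr i" "j \<noteq> i" "j' \<noteq> i"
  shows "j = j'"
proof (rule ccontr)
  assume ne: "j \<noteq> j'"
  define S where "S = {x. x < 2 * n \<and> cr x = cr i}"
  have "cr i < n" using kd assms(1) unfolding knot_diagram_def by blast
  then have cS: "card S = 2" using kd unfolding knot_diagram_def S_def by blast
  have fS: "finite S" unfolding S_def by simp
  have sub: "{i, j, j'} \<subseteq> S" using assms unfolding S_def by auto
  have "card {i, j, j'} = 3" using ne assms by simp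
  then have "3 \<le> card S" using card_mono[OF fS sub] by simp
  then show False using cS by simp
qed

lemma asc_ov:
  assumes "i < 2 * n" "j < 2 * n" "i \<noteq> j" "cr i = cr j" "pos_from n e i < pos_from n e j"
  shows "ov j"
  using asc assms unfolding ascending_from_def by blast

lemma f_dart: "d \<in> darts n \<Longrightarrow> face_step n rot d \<in> darts n"
  unfolding face_step_def using rot_props(1) opp_dart npos by blast

lemma f_inj:
  assumes "x \<in> darts n" "y \<in> darts n" "face_step n rot x = face_step n rot y"
  shows "x = y"
proof -
  have "opp n x = opp n y"
    using rot_inj[OF opp_dart[OF npos] opp_dart[OF npos]] assms(3) unfolding face_step_def by blast
  then show ?thesis using opp_opp assms(1,2) by metis
qed

lemma funpow_dart: "d \<in> darts n \<Longrightarrow> (face_step n rot ^^ j) d \<in> darts n"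
  by (induction j) (auto simp: f_dart)

lemma funpow_inj:
  "x \<in> darts n \<Longrightarrow> y \<in> darts n \<Longrightarrow> (face_step n rot ^^ j) x = (face_step n rot ^^ j) y \<Longrightarrow> x = y"
proof (induction j)
  case 0
  then show ?case by simp
next
  case (Suc j)
  then show ?case using f_inj funpow_dart by simp
qed

lemma periodic:
  assumes d: "d \<in> darts n"
  shows "\<exists>m>0. (face_step n rot ^^ m) d = d"
proof -
  define f where "f = face_step n rot"
  have "range (\<lambda>j. (f ^^ j) d) \<subseteq> darts n" using funpow_dart[OF d] f_def by blast
  then have "finite (range (\<lambda>j. (f ^^ j) d))" using finite_darts finite_subset by blast
  then have "\<not> inj (\<lambda>j. (f ^^ j) d)" using finite_imageD by fastforce
  then obtain i j where ij: "i \<noteq> j" "(f ^^ i) d = (f ^^ j) d" unfolding inj_def by blast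
  have "\<exists>a b. a < b \<and> (f ^^ a) d = (f ^^ b) d"
    using ij by (metis linorder_neqE_nat)
  then obtain a b where ab: "a < b" "(f ^^ a) d = (f ^^ b) d" by blast
  have "(f ^^ b) d = (f ^^ a) ((f ^^ (b - a)) d)"
    using ab(1) by (metis funpow_add le_add_diff_inverse less_imp_le comp_apply)
  then have "(f ^^ a) d = (f ^^ a) ((f ^^ (b - a)) d)" using ab by simp
  then have "d = (f ^^ (b - a)) d"
    using funpow_inj[OF d funpow_dart[OF d]] f_def by blast
  then show ?thesis using ab(1) f_def by (intro exI[of _ "b - a"]) auto
qed


lemma main_face:
  assumes d0: "d0 \<in> darts n" and F: "F = face_of n rot d0"
    and bd: "bounded_face n e F" and c2: "2 \<le> card F"
  shows "\<exists>d\<in>F. over_edge n ov (edge_of n d)"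
proof -
  define f where "f = face_step n rot"
  have Fdef: "F = {(f ^^ k) d0 | k. True}" using F f_def face_of_def by simp
  have Fd: "F \<subseteq> darts n" using funpow_dart[OF d0] Fdef f_def by blast
  have finF: "finite F" using Fd finite_darts finite_subset by blast
  have d0F: "d0 \<in> F" unfolding Fdef by (auto intro: exI[of _ 0])
  obtain m where m: "m > 0" "(f ^^ m) d0 = d0" using periodic[OF d0] f_def by blast
  have succ: "f d \<in> F" if dF: "d \<in> F" for d
  proof -
    obtain k where "d = (f ^^ k) d0" using dF Fdef by blast
    then have "f d = (f ^^ Suc k) d0" by simp
    then show ?thesis unfolding Fdef by blast
  qed
  have pred: "\<exists>d'\<in>F. f d' = d" if dF: "d \<in> F" for d
  proof -
    obtain k where k: "d = (f ^^ k) d0" using dF Fdef by blast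
    show ?thesis
    proof (cases k)
      case 0
      have "f ((f ^^ (m - 1)) d0) = (f ^^ Suc (m - 1)) d0" by simp
      also have "\<dots> = d0" using m by simp
      finally have "f ((f ^^ (m - 1)) d0) = d" using k 0 by simp
      moreover have "(f ^^ (m - 1)) d0 \<in> F" unfolding Fdef by blast
      ultimately show ?thesis by blast
    next
      case (Suc k')
      then have "f ((f ^^ k') d0) = d" using k by simp
      then show ?thesis unfolding Fdef by blast
    qed
  qed
  have nofix: False if dF: "d \<in> F" and fdd: "f d = d" for d
  proof -
    obtain k where k: "d = (f ^^ k) d0" using dF Fdef by blast
    have fd: "(f ^^ j) d = d" for j by (induction j) (use fdd in auto)
    have per: "(f ^^ (m * t)) d0 = d0" for t
    proof (induction t)
      case 0
      then show ?case by simp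
    next
      case (Suc t)
      have "(f ^^ (m * Suc t)) d0 = (f ^^ m) ((f ^^ (m * t)) d0)"
        by (simp add: funpow_add)
      then show ?case using Suc m by simp
    qed
    have "m * k \<ge> k" using m by simp
    then have "(f ^^ (m * k)) d0 = (f ^^ (m * k - k)) ((f ^^ k) d0)"
      by (metis funpow_add le_add_diff_inverse2 comp_apply)
    then have "d0 = d" using per[of k] fd k by simp
    then have "F \<subseteq> {d}" unfolding Fdef using fd by auto
    then have "card F \<le> card {d}" by (intro card_mono) simp_all
    then have "card F \<le> 1" by simp
    then show False using c2 by simp
  qed
  define P where "P = pos_from n e"
  define g where "g = (\<lambda>d. P (edge_of n d))"
  have ne: "F \<noteq> {}" using d0F by blast
  have "Max (g ` F) \<in> g ` F" using finF ne by simp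
  then obtain ds where ds: "ds \<in> F" "g ds = Max (g ` F)" by (metis imageE)
  have dsmax: "g d \<le> g ds" if "d \<in> F" for d
    using ds finF that by simp
  have edge_ne: "edge_of n d \<noteq> e" if "d \<in> F" for d
    using bd that unfolding bounded_face_def by blast
  define k where "k = edge_of n ds"
  define b where "b = (k + 1) mod (2 * n)"
  have dsd: "ds \<in> darts n" using ds Fd by blast
  have k2: "k < 2 * n" using dart_edge(1)[OF dsd] k_def by simp
  have kne: "k \<noteq> e" using edge_ne ds k_def by simp
  have b2: "b < 2 * n" using npos b_def by simp
  have Pb: "P b = P k + 1" using pos_succ[OF k2 e_lt kne] P_def b_def by simp
  have gk: "g ds = P k" using g_def k_def by simp
  have bound: "P (fst d) \<le> P k + 1 \<and> P (fst (opp n d)) \<le> P k + 1" if "d \<in> F" for d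
  proof -
    have dd: "d \<in> darts n" using that Fd by blast
    define k' where "k' = edge_of n d"
    have k'2: "k' < 2 * n" using dart_edge(1)[OF dd] k'_def by simp
    have "P ((k' + 1) mod (2 * n)) = P k' + 1"
      using pos_succ[OF k'2 e_lt] edge_ne[OF that] k'_def P_def by simp
    moreover have "P k' \<le> P k" using dsmax[OF that] gk g_def k'_def by simp
    ultimately show ?thesis using dart_edge(2,3)[OF dd] k'_def by auto
  qed
  define EP where "EP v = (\<exists>d\<in>F. v = fst d \<or> v = fst (opp n d))" for v
  have EP_lt: "v < 2 * n" if ev: "EP v" for v
  proof -
    obtain d where d: "d \<in> F" "v = fst d \<or> v = fst (opp n d)" using ev unfolding EP_def by blast
    have "d \<in> darts n" "opp n d \<in> darts n" using d Fd opp_dart npos by auto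
    then show ?thesis using d(2) unfolding darts_def by auto
  qed
  have EP_P: "P v \<le> P k + 1" if "EP v" for v
    using that bound unfolding EP_def by blast
  have partner: "\<exists>u. EP u \<and> u \<noteq> v \<and> cr u = cr v" if ev: "EP v" for v
  proof -
    obtain d where d: "d \<in> F" "v = fst d \<or> v = fst (opp n d)" using ev unfolding EP_def by blast
    have od: "opp n d \<in> darts n" using opp_dart npos by blast
    show ?thesis
    proof (cases "v = fst (opp n d)")
      case True
      have fd: "f d = rot (opp n d)" using f_def face_step_def by simp
      have "EP (fst (f d))" using succ[OF d(1)] unfolding EP_def by blast
      then have "EP (fst (rot (opp n d)))" using fd by simp
      then show ?thesis using True rot_fst_ne[OF od] rot_props(2)[OF od] by blast
    next
      case False
      then have vd: "v = fst d" using d by blast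
      obtain d' where d': "d' \<in> F" "f d' = d" using pred d(1) by blast
      have od': "opp n d' \<in> darts n" using opp_dart npos by blast
      have rd: "rot (opp n d') = d" using d' f_def face_step_def by simp
      have "EP (fst (opp n d'))" using d'(1) EP_def by blast
      moreover have "fst (opp n d') \<noteq> v" using vd rd rot_fst_ne[OF od'] by simp
      moreover have "cr (fst (opp n d')) = cr v" using vd rd rot_props(2)[OF od'] by simp
      ultimately show ?thesis by blast
    qed
  qed
  have dsform: "ds = (k, True) \<or> ds = (b, False)" using dart_edge(4)[OF dsd] k_def b_def by simp
  have opp_kT: "opp n (k, True) = (b, False)" unfolding opp_def b_def by simp
  have opp_bF: "opp n (b, False) = (k, True)"
    unfolding opp_def b_def using arith_back[OF k2] by simp
  have EPk: "EP k \<and> EP b"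
  proof (cases "ds = (k, True)")
    case True
    then show ?thesis using ds(1) opp_kT unfolding EP_def by force
  next
    case False
    then have "ds = (b, False)" using dsform by simp
    then show ?thesis using ds(1) opp_bF unfolding EP_def by force
  qed
  then have EPb: "EP b" by simp
  from EPk have EPk: "EP k" by simp
  have ovb: "ov b"
  proof -
    obtain u where u: "EP u" "u \<noteq> b" "cr u = cr b" using partner[OF EPb] by blast
    have u2: "u < 2 * n" using EP_lt u(1) by blast
    have "P u \<noteq> P b" using pos_inj[OF u2 b2 e_lt] u(2) P_def by blast
    then have "P u < P b" using EP_P[OF u(1)] Pb by simp
    then show ?thesis using asc_ov[OF u2 b2 u(2) u(3)] P_def by simp
  qed
  have ovk: "ov k"
  proof -
    obtain u where u: "EP u" "u \<noteq> k" "cr u = cr k" using partner[OF EPk] by blast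
    have u2: "u < 2 * n" using EP_lt u(1) by blast
    have "P u \<noteq> P k" using pos_inj[OF u2 k2 e_lt] u(2) P_def by blast
    show ?thesis
    proof (cases "P u < P k")
      case True
      then show ?thesis using asc_ov[OF u2 k2 u(2) u(3)] P_def by simp
    next
      case False
      then have "P u = P b" using EP_P[OF u(1)] Pb \<open>P u \<noteq> P k\<close> by simp
      then have ub: "u = b" using pos_inj[OF u2 b2 e_lt] P_def by blast
      have crkb: "cr b = cr k" using u ub by simp
      have bk: "b \<noteq> k" using Pb by auto
      have kT: "(k, True) \<in> darts n" "(k, False) \<in> darts n" using k2 darts_def by auto
      have bT: "(b, True) \<in> darts n" "(b, False) \<in> darts n" using b2 darts_def by auto
      have r1: "fst (rot (k, True)) = b"
      proof -
        have "fst (rot (k, True)) < 2 * n" using rot_props(1)[OF kT(1)] darts_def by auto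
        moreover have "cr (fst (rot (k, True))) = cr k" using rot_props(2)[OF kT(1)] by simp
        moreover have "fst (rot (k, True)) \<noteq> k" using rot_fst_ne[OF kT(1)] by simp
        ultimately show ?thesis using partner_unique[OF k2 _ b2 _ crkb _ bk] by blast
      qed
      have gbig: "g d > g ds" if "d \<in> darts n" "edge_of n d = b" for d
        using that gk g_def Pb by simp
      have "rot (k, True) = (b, True) \<or> rot (k, True) = (b, False)"
        using r1 by (cases "rot (k, True)") auto
      then show ?thesis
      proof
        assume h: "rot (k, True) = (b, True)"
        have h2: "rot (b, True) = (k, False)" using rot_props(3)[OF kT(1)] h by simp
        have h3: "rot (k, False) = (b, False)" using rot_props(3)[OF bT(1)] h2 by simp
        have h4: "rot (b, False) = (k, True)" using rot_props(3)[OF kT(2)] h3 by simp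
        have f1: "f (k, True) = (k, True)" using f_def face_step_def opp_kT h4 by simp
        have f2: "f (b, False) = (b, True)" using f_def face_step_def opp_bF h by simp
        show ?thesis
        proof (cases "ds = (k, True)")
          case True
          then show ?thesis using nofix[OF ds(1)] f1 by simp
        next
          case False
          then have "ds = (b, False)" using dsform by simp
          then have "(b, True) \<in> F" using succ[OF ds(1)] f2 by simp
          then have "g (b, True) \<le> g ds" using dsmax by blast
          moreover have "edge_of n (b, True) = b" unfolding edge_of_def by simp
          ultimately show ?thesis using gbig[OF bT(1)] by simp
        qed
      next
        assume h: "rot (k, True) = (b, False)"
        have h2: "rot (b, False) = (k, False)" using rot_props(3)[OF kT(1)] h by simp
        have h3: "rot (k, False) = (b, True)" using rot_props(3)[OF bT(2)] h2 by simp
        have h4: "rot (b, True) = (k, True)" using rot_props(3)[OF kT(2)] h3 by simp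
        have f1: "f (b, False) = (b, False)" using f_def face_step_def opp_bF h2 h by simp
        show ?thesis
        proof (cases "ds = (b, False)")
          case True
          then show ?thesis using nofix[OF ds(1)] f1 by simp
        next
          case False
          then have dsk: "ds = (k, True)" using dsform by simp
          obtain d' where d': "d' \<in> F" "f d' = ds" using pred ds(1) by blast
          have d'd: "d' \<in> darts n" using d' Fd by blast
          have od': "opp n d' \<in> darts n" using opp_dart npos by blast
          have "rot (opp n d') = rot (b, True)" using d' dsk h4 f_def face_step_def by simp
          then have "opp n d' = (b, True)" using rot_inj[OF od' bT(1)] by blast
          then have d'eq: "d' = opp n (b, True)" using opp_opp[OF d'd] by metis
          have "edge_of n d' = b"
            unfolding d'eq opp_def edge_of_def using arith_back[OF b2] by simp
          moreover have "g d' \<le> g ds" using dsmax d'(1) by blast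
          ultimately show ?thesis using gbig[OF d'd] by simp
        qed
      qed
    qed
  qed
  have "over_edge n ov (edge_of n ds)"
    unfolding over_edge_def using ovk ovb k_def b_def by simp
  then show ?thesis using ds(1) by blast
qed

end

theorem lemma5p7:
  fixes n :: nat and cr :: "nat \<Rightarrow> nat" and ov :: "nat \<Rightarrow> bool"
    and rot :: "dart \<Rightarrow> dart" and e :: nat
  assumes "knot_diagram n cr ov rot"
    and "e < 2 * n"
    and "ascending_from n cr ov e"
  shows "\<forall>F \<in> faces n rot. bounded_face n e F \<longrightarrow>
           (card F = 1 \<longrightarrow> admits_R1 n rot F) \<and>
           (card F = 2 \<longrightarrow> admits_R2 n ov F) \<and>
           (card F = 3 \<longrightarrow> admits_R3 n ov F)"
proof (intro ballI impI conjI)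
  fix F assume FF: "F \<in> faces n rot" and bd: "bounded_face n e F"
  obtain d0 where d0: "d0 \<in> darts n" "F = face_of n rot d0"
    using FF unfolding faces_def by blast
  have d0F: "d0 \<in> F" unfolding d0(2) face_of_def by (auto intro: exI[of _ 0])
  have fd0F: "face_step n rot d0 \<in> F"
    unfolding d0(2) face_of_def by (auto intro: exI[of _ "Suc 0"])
  show "admits_R1 n rot F" if c: "card F = 1"
  proof -
    obtain x where x: "F = {x}" using c card_1_singletonE by blast
    then have "face_step n rot d0 = d0" using d0F fd0F by simp
    then show ?thesis unfolding admits_R1_def using c d0F by blast
  qed
  have ex: "\<exists>d\<in>F. over_edge n ov (edge_of n d)" if "2 \<le> card F"
    using main_face[OF assms d0 bd that] .
  show "admits_R2 n ov F" if "card F = 2"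
    unfolding admits_R2_def using ex that by simp
  show "admits_R3 n ov F" if "card F = 3"
    unfolding admits_R3_def using ex that by simp
qed

end
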